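(* Let $k\ge 1$, $c\ge 1$, $t\ge 1$ be integers. Assume that every $k$-tree admits a $c$-clique-colorable $t$-track layout. Then every $(k+1)$-tree admits a track layout on $t\cdot(2c+1)$ tracks, i.e. has track number at most $t(2c+1)$.
   Context: All graphs are finite, simple and undirected. A $k$-tree is defined recursively: the complete graph $K_k$ is a $k$-tree, and adding to a $k$-tree a new vertex adjacent to all vertices of some $k$-clique yields a $k$-tree. A $t$-track assignment of a graph $G$ is a partition of $V(G)$ into $t$ sets $V_1,\dots,V_t$ (tracks), each an independent set of $G$, together with a total order $<_i$ on each $V_i$. An X-crossing consists of two edges $(u,v)$ and $(x,y)$ with $u,x\in V_i$, $v,y\in V_j$ ($i\neq j$), $u<_i x$ and $y<_j v$. A $t$-track layout is a $t$-track assignment with no X-crossing; the track number $\mathrm{tn}(G)$ is the minimum $t$ for which $G$ has a $t$-track layout. Given a track layout of $G$, a clique $C_1$ precedes a clique $C_2$, written $C_1\prec C_2$, if for every track $V_i$ and all $u\in V_i\cap C_1$, $w\in V_i\cap C_2$ we have $u\le_i w$. A set $S$ of cliques is nicely ordered if its elements can be listed as $C_1,\dots,C_{|S|}$ with $C_i\prec C_j$ for all $i<j$. A track layout of $G$ is $c$-clique-colorable if the set of all maximal cliques of $G$ can be partitioned into $c$ nicely ordered subsets. *)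

theory Defs
  imports Main
begin

definition complete_edges :: "nat set \<Rightarrow> (nat \<times> nat) set" where
  "complete_edges C = {(u,w). u \<in> C \<and> w \<in> C \<and> u \<noteq> w}"

inductive ktree :: "nat \<Rightarrow> nat set \<Rightarrow> (nat \<times> nat) set \<Rightarrow> bool" for k :: nat where
  base: "finite V \<Longrightarrow> card V = k \<Longrightarrow> ktree k V (complete_edges V)"
| step: "ktree k V E \<Longrightarrow> C \<subseteq> V \<Longrightarrow> card C = k \<Longrightarrow> complete_edges C \<subseteq> E \<Longrightarrow> v \<notin> V
         \<Longrightarrow> ktree k (insert v V) (E \<union> {(v,w) | w. w \<in> C} \<union> {(w,v) | w. w \<in> C})"

definition track_assignment ::
  "nat set \<Rightarrow> (nat \<times> nat) set \<Rightarrow> nat \<Rightarrow> (nat \<Rightarrow> nat) \<Rightarrow> (nat \<Rightarrow> nat rel) \<Rightarrow> bool" where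
  "track_assignment V E t tr ord \<longleftrightarrow>
     (\<forall>v\<in>V. tr v < t) \<and>
     (\<forall>u w. (u,w) \<in> E \<longrightarrow> tr u \<noteq> tr w) \<and>
     (\<forall>i<t. linear_order_on {v\<in>V. tr v = i} (ord i))"

definition has_X_crossing ::
  "(nat \<times> nat) set \<Rightarrow> (nat \<Rightarrow> nat) \<Rightarrow> (nat \<Rightarrow> nat rel) \<Rightarrow> bool" where
  "has_X_crossing E tr ord \<longleftrightarrow>
     (\<exists>u v x y. (u,v) \<in> E \<and> (x,y) \<in> E \<and> tr u = tr x \<and> tr v = tr y \<and> tr u \<noteq> tr v \<and>
        (u,x) \<in> ord (tr u) \<and> u \<noteq> x \<and> (y,v) \<in> ord (tr v) \<and> y \<noteq> v)"

definition track_layout ::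
  "nat set \<Rightarrow> (nat \<times> nat) set \<Rightarrow> nat \<Rightarrow> (nat \<Rightarrow> nat) \<Rightarrow> (nat \<Rightarrow> nat rel) \<Rightarrow> bool" where
  "track_layout V E t tr ord \<longleftrightarrow> track_assignment V E t tr ord \<and> \<not> has_X_crossing E tr ord"

definition track_number :: "nat set \<Rightarrow> (nat \<times> nat) set \<Rightarrow> nat" where
  "track_number V E = (LEAST t. \<exists>tr ord. track_layout V E t tr ord)"

definition is_clique :: "nat set \<Rightarrow> (nat \<times> nat) set \<Rightarrow> nat set \<Rightarrow> bool" where
  "is_clique V E C \<longleftrightarrow> C \<subseteq> V \<and> (\<forall>u\<in>C. \<forall>w\<in>C. u \<noteq> w \<longrightarrow> (u,w) \<in> E)"

definition maximal_cliques :: "nat set \<Rightarrow> (nat \<times> nat) set \<Rightarrow> nat set set" where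
  "maximal_cliques V E = {C. is_clique V E C \<and> (\<forall>D. is_clique V E D \<and> C \<subseteq> D \<longrightarrow> D = C)}"

definition clique_precedes ::
  "(nat \<Rightarrow> nat) \<Rightarrow> (nat \<Rightarrow> nat rel) \<Rightarrow> nat set \<Rightarrow> nat set \<Rightarrow> bool" where
  "clique_precedes tr ord C1 C2 \<longleftrightarrow>
     (\<forall>u\<in>C1. \<forall>w\<in>C2. tr u = tr w \<longrightarrow> (u,w) \<in> ord (tr u))"

definition nicely_ordered ::
  "(nat \<Rightarrow> nat) \<Rightarrow> (nat \<Rightarrow> nat rel) \<Rightarrow> nat set set \<Rightarrow> bool" where
  "nicely_ordered tr ord S \<longleftrightarrow>
     (\<exists>L. distinct L \<and> set L = S \<and>
        (\<forall>i j. i < j \<and> j < length L \<longrightarrow> clique_precedes tr ord (L ! i) (L ! j)))"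

definition clique_colorable ::
  "nat set \<Rightarrow> (nat \<times> nat) set \<Rightarrow> (nat \<Rightarrow> nat) \<Rightarrow> (nat \<Rightarrow> nat rel) \<Rightarrow> nat \<Rightarrow> bool" where
  "clique_colorable V E tr ord c \<longleftrightarrow>
     (\<exists>col :: nat set \<Rightarrow> nat. (\<forall>C\<in>maximal_cliques V E. col C < c) \<and>
        (\<forall>j<c. nicely_ordered tr ord {C \<in> maximal_cliques V E. col C = j}))"

end

theory Submission
  imports Defs "HOL-Library.List_Lexorder"
begin


lemma ktree_basic: "ktree k V E \<Longrightarrow> finite V \<and> E \<subseteq> V \<times> V"
proof (induction rule: ktree.induct)
  case (base V) then show ?case by (auto simp: complete_edges_def)
next
  case (step V E C v) then show ?case by auto
qed

lemma complete_edges_insert: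
  "complete_edges (insert v C) = complete_edges C \<union> {(v,w) | w. w \<in> C - {v}} \<union> {(w,v) | w. w \<in> C - {v}}"
  by (auto simp: complete_edges_def)

lemma ktree_complete_Suc:
  assumes "finite V" "card V = Suc k"
  shows "ktree k V (complete_edges V)"
proof -
  obtain v where v: "v \<in> V" using assms by fastforce
  let ?V0 = "V - {v}"
  have c0: "card ?V0 = k" using assms v by simp
  have f0: "finite ?V0" using assms by simp
  have "ktree k ?V0 (complete_edges ?V0)" using ktree.base[OF f0 c0] .
  from ktree.step[OF this subset_refl c0 subset_refl, of v]
  have "ktree k (insert v ?V0) (complete_edges ?V0 \<union> {(v,w) | w. w \<in> ?V0} \<union> {(w,v) | w. w \<in> ?V0})"
    by simp
  moreover have "insert v ?V0 = V" using v by auto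
  moreover have "complete_edges ?V0 \<union> {(v,w) | w. w \<in> ?V0} \<union> {(w,v) | w. w \<in> ?V0} = complete_edges V"
    using v by (auto simp: complete_edges_def)
  ultimately show ?thesis by simp
qed

lemma ktree_clique_ext:
  assumes "ktree k V E"
  shows "S \<subseteq> V \<Longrightarrow> (\<forall>u\<in>S. \<forall>w\<in>S. u \<noteq> w \<longrightarrow> (u,w) \<in> E) \<Longrightarrow> card S \<le> k \<Longrightarrow>
     \<exists>K. S \<subseteq> K \<and> K \<subseteq> V \<and> card K = k \<and> complete_edges K \<subseteq> E"
  using assms
proof (induction arbitrary: S rule: ktree.induct)
  case (base V) then show ?case by auto
next
  case (step V E C v)
  have EV: "E \<subseteq> V \<times> V" "finite V" using ktree_basic[OF step.hyps(1)] by auto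
  show ?case
  proof (cases "v \<in> S")
    case False
    have SV: "S \<subseteq> V" using step.prems(1) False by blast
    have SE: "\<forall>u\<in>S. \<forall>w\<in>S. u \<noteq> w \<longrightarrow> (u,w) \<in> E"
    proof (intro ballI impI)
      fix u w assume uw: "u \<in> S" "w \<in> S" "u \<noteq> w"
      then have "(u,w) \<in> E \<union> {(v,w) | w. w \<in> C} \<union> {(w,v) | w. w \<in> C}" using step.prems(2) by blast
      moreover have "u \<noteq> v" "w \<noteq> v" using uw False by auto
      ultimately show "(u,w) \<in> E" by blast
    qed
    show ?thesis using step.IH[OF SV SE step.prems(3)] by blast
  next
    case True
    let ?S' = "S - {v}"
    have S'C: "?S' \<subseteq> C"
    proof
      fix w assume w: "w \<in> ?S'"
      then have "(v,w) \<in> E \<union> {(v,w) | w. w \<in> C} \<union> {(w,v) | w. w \<in> C}" using step.prems(2) True by auto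
      moreover have "(v,w) \<notin> E" using EV step.hyps(5) by auto
      ultimately show "w \<in> C" using w by auto
    qed
    have fC: "finite C" using EV step.hyps(2) finite_subset by blast
    have fS: "finite S" using step.prems(1) EV by (meson finite_insert finite_subset)
    have cS': "card ?S' \<le> k - 1" using step.prems(3) True fS by simp
    have k1: "k \<ge> 1" using True step.prems(3) fS card_0_eq by fastforce
    obtain K0 where K0: "?S' \<subseteq> K0" "K0 \<subseteq> C" "card K0 = k - 1"
    proof -
      have fS': "finite ?S'" using S'C fC finite_subset by blast
      have "card (C - ?S') = k - card ?S'" using card_Diff_subset[OF fS' S'C] step.hyps(3) by simp
      then have "k - 1 - card ?S' \<le> card (C - ?S')" by simp
      then obtain X where X: "X \<subseteq> C - ?S'" "card X = k - 1 - card ?S'" "finite X"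
        by (rule obtain_subset_with_card_n)
      have d: "?S' \<inter> X = {}" using X by auto
      have "card (?S' \<union> X) = card ?S' + card X" using card_Un_disjoint[OF fS' X(3) d] .
      also have "\<dots> = k - 1" using X(2) cS' by simp
      finally have c: "card (?S' \<union> X) = k - 1" .
      have a: "?S' \<subseteq> ?S' \<union> X" by blast
      have b: "?S' \<union> X \<subseteq> C" using S'C X(1) by blast
      show ?thesis by (rule that[OF a b c])
    qed
    have vK0: "v \<notin> K0" using K0 step.hyps(2,5) by auto
    have fK0: "finite K0" using K0 fC finite_subset by blast
    show ?thesis
    proof (intro exI conjI)
      show "S \<subseteq> insert v K0" using K0 True by auto
      show "insert v K0 \<subseteq> insert v V" using K0 step.hyps(2) by auto
      show "card (insert v K0) = k" using vK0 fK0 K0 k1 by simp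
      show "complete_edges (insert v K0) \<subseteq> E \<union> {(v,w) | w. w \<in> C} \<union> {(w,v) | w. w \<in> C}"
      proof
        fix x assume "x \<in> complete_edges (insert v K0)"
        then obtain a b where x: "x = (a,b)" "a \<in> insert v K0" "b \<in> insert v K0" "a \<noteq> b"
          by (auto simp: complete_edges_def)
        have "a \<in> K0 \<Longrightarrow> b \<in> K0 \<Longrightarrow> (a,b) \<in> E" using K0(2) x(4) step.hyps(4)
          unfolding complete_edges_def by blast
        then show "x \<in> E \<union> {(v,w) | w. w \<in> C} \<union> {(w,v) | w. w \<in> C}" using x K0(2) by blast
      qed
    qed
  qed
qed


definition inv1 where
 "inv1 k V E L R P E' \<longleftrightarrow> ktree k V E' \<and>
   (\<forall>u w. (u,w) \<in> E \<longrightarrow> u \<in> V \<and> w \<in> V) \<and>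
   (\<forall>u w. (u,w) \<in> E \<longrightarrow> L u = L w \<or> L u = Suc (L w) \<or> L w = Suc (L u)) \<and>
   (\<forall>u w. (u,w) \<in> E \<longrightarrow> L u = L w \<longrightarrow> (u,w) \<in> E' \<and> R u = R w) \<and>
   (\<forall>u w. (u,w) \<in> E \<longrightarrow> Suc (L u) = L w \<longrightarrow> u \<in> P (R w)) \<and>
   (\<forall>w\<in>V. 0 < L w \<longrightarrow> P (R w) \<noteq> {} \<and> P (R w) \<subseteq> V \<and> (\<forall>p\<in>P (R w). Suc (L p) = L w) \<and>
        (\<forall>p\<in>P (R w). \<forall>q\<in>P (R w). p \<noteq> q \<longrightarrow> (p,q) \<in> E)) \<and>
   (\<forall>w\<in>V. R w \<in> V)"

lemma phase1:
  assumes "ktree (Suc k) V E"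
  shows "\<exists>L R P E'. inv1 k V E L R P E'"
  using assms
proof (induction rule: ktree.induct)
  case (base V)
  obtain r where r: "r \<in> V" using base by fastforce
  have "inv1 k V (complete_edges V) (\<lambda>_. 0) (\<lambda>_. r) (\<lambda>_. {}) (complete_edges V)"
    unfolding inv1_def using ktree_complete_Suc[OF base] r by (auto simp: complete_edges_def)
  then show ?case by blast
next
  case (step V E C v)
  from step.IH obtain L R P E' where inv: "inv1 k V E L R P E'" by blast
  note c = inv[unfolded inv1_def]
  have kt: "ktree k V E'" using c by (rule conjunct1)
  note c1 = c[THEN conjunct2] note c2 = c1[THEN conjunct2] note c3 = c2[THEN conjunct2]
  note c4 = c3[THEN conjunct2] note c5 = c4[THEN conjunct2] note c6 = c5[THEN conjunct2]
  have I0: "\<And>u w. (u,w) \<in> E \<Longrightarrow> u \<in> V \<and> w \<in> V" using c1[THEN conjunct1] by blast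
  have I1: "\<And>u w. (u,w) \<in> E \<Longrightarrow> L u = L w \<or> L u = Suc (L w) \<or> L w = Suc (L u)" using c2[THEN conjunct1] by blast
  have I2: "\<And>u w. (u,w) \<in> E \<Longrightarrow> L u = L w \<Longrightarrow> (u,w) \<in> E' \<and> R u = R w" using c3[THEN conjunct1] by blast
  have I3: "\<And>u w. (u,w) \<in> E \<Longrightarrow> Suc (L u) = L w \<Longrightarrow> u \<in> P (R w)" using c4[THEN conjunct1] by blast
  have I4: "\<And>w. w\<in>V \<Longrightarrow> 0 < L w \<Longrightarrow> P (R w) \<noteq> {} \<and> P (R w) \<subseteq> V \<and> (\<forall>p\<in>P (R w). Suc (L p) = L w) \<and>
        (\<forall>p\<in>P (R w). \<forall>q\<in>P (R w). p \<noteq> q \<longrightarrow> (p,q) \<in> E)"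
    using c5[THEN conjunct1] by blast
  have I5: "\<And>w. w\<in>V \<Longrightarrow> R w \<in> V" using c6 by blast
  have fV: "finite V" using ktree_basic[OF kt] by blast
  have fC: "finite C" using fV step.hyps(2) finite_subset by blast
  have Cne: "C \<noteq> {}" using step.hyps(3) by auto
  define m where "m = Min (L ` C)"
  have "m \<in> L ` C" unfolding m_def using fC Cne by simp
  then obtain w0 where w0: "w0 \<in> C" "L w0 = m" by auto
  have mle: "\<And>w. w \<in> C \<Longrightarrow> m \<le> L w" unfolding m_def using fC by simp
  have Cedge: "\<And>a b. a \<in> C \<Longrightarrow> b \<in> C \<Longrightarrow> a \<noteq> b \<Longrightarrow> (a,b) \<in> E"
    using step.hyps(4) unfolding complete_edges_def by blast
  have Cspan: "\<And>w. w \<in> C \<Longrightarrow> L w = m \<or> L w = Suc m"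
  proof -
    fix w assume w: "w \<in> C"
    show "L w = m \<or> L w = Suc m"
    proof (cases "w = w0")
      case True then show ?thesis using w0 by simp
    next
      case False
      then have "(w0,w) \<in> E" using Cedge w w0 by blast
      then show ?thesis using I1[of w0 w] w0 mle[OF w] by auto
    qed
  qed
  define S where "S = {w\<in>C. L w = Suc m}"
  have SC: "S \<subseteq> C" unfolding S_def by blast
  have SV: "S \<subseteq> V" using SC step.hyps(2) by blast
  have Scl: "\<forall>u\<in>S. \<forall>w\<in>S. u \<noteq> w \<longrightarrow> (u,w) \<in> E'"
  proof (intro ballI impI)
    fix u w assume uw: "u \<in> S" "w \<in> S" "u \<noteq> w"
    then have "(u,w) \<in> E" "L u = L w" using Cedge unfolding S_def by auto
    then show "(u,w) \<in> E'" using I2[of u w] by blast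
  qed
  have "S \<subseteq> C - {w0}" using w0 unfolding S_def by auto
  then have cS: "card S \<le> k" using card_mono[of "C - {w0}" S] fC step.hyps(3) w0(1) by simp
  obtain K where K: "S \<subseteq> K" "K \<subseteq> V" "card K = k" "complete_edges K \<subseteq> E'"
    using ktree_clique_ext[OF kt SV Scl cS] by blast
  define E'1 where "E'1 = E' \<union> {(v,w) | w. w \<in> K} \<union> {(w,v) | w. w \<in> K}"
  have kt1: "ktree k (insert v V) E'1" unfolding E'1_def by (rule ktree.step[OF kt K(2,3,4) step.hyps(5)])
  define L1 where "L1 = L(v := Suc m)"
  have L1V: "\<And>x. x \<in> V \<Longrightarrow> L1 x = L x" unfolding L1_def using step.hyps(5) by auto
  have L1v: "L1 v = Suc m" unfolding L1_def by simp
  obtain R1 P1 where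
    N0: "\<And>x. x \<in> V \<Longrightarrow> R1 x = R x" and
    N1: "R1 v \<in> insert v V" and
    N2: "\<And>w. w\<in>S \<Longrightarrow> R1 v = R w" and
    N3: "\<And>w. w\<in>C \<Longrightarrow> L w = m \<Longrightarrow> w \<in> P1 (R1 v)" and
    N4: "P1 (R1 v) \<noteq> {} \<and> P1 (R1 v) \<subseteq> V \<and> (\<forall>p\<in>P1 (R1 v). L p = m) \<and>
        (\<forall>p\<in>P1 (R1 v). \<forall>q\<in>P1 (R1 v). p \<noteq> q \<longrightarrow> (p,q) \<in> E)" and
    N5: "\<And>x. x \<in> V \<Longrightarrow> P1 (R x) = P (R x)"
  proof (cases "S = {}")
    case True
    have "\<And>x. x \<in> V \<Longrightarrow> R x \<noteq> v" using I5 step.hyps(5) by blast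
    moreover have "\<And>w. w\<in>C \<Longrightarrow> L w = m" using Cspan True unfolding S_def by blast
    ultimately have h1: "\<And>x. x \<in> V \<Longrightarrow> R x \<noteq> v" and h2: "\<And>w. w\<in>C \<Longrightarrow> L w = m" by blast+
    show ?thesis
    proof (rule that[of "R(v := v)" "P(v := C)"])
      show "\<And>x. x \<in> V \<Longrightarrow> (R(v := v)) x = R x" using step.hyps(5) by auto
      show "(R(v := v)) v \<in> insert v V" by simp
      show "\<And>w. w\<in>S \<Longrightarrow> (R(v := v)) v = R w" using True by simp
      show "\<And>w. w\<in>C \<Longrightarrow> L w = m \<Longrightarrow> w \<in> (P(v := C)) ((R(v := v)) v)" by simp
      show "(P(v := C)) ((R(v := v)) v) \<noteq> {} \<and> (P(v := C)) ((R(v := v)) v) \<subseteq> V \<and>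
        (\<forall>p\<in>(P(v := C)) ((R(v := v)) v). L p = m) \<and>
        (\<forall>p\<in>(P(v := C)) ((R(v := v)) v). \<forall>q\<in>(P(v := C)) ((R(v := v)) v). p \<noteq> q \<longrightarrow> (p,q) \<in> E)"
        using Cne step.hyps(2) h2 Cedge by simp
      show "\<And>x. x \<in> V \<Longrightarrow> (P(v := C)) (R x) = P (R x)" using h1 by simp
    qed
  next
    case False
    then obtain w1 where w1: "w1 \<in> S" by blast
    have w1C: "w1 \<in> C" "L w1 = Suc m" using w1 unfolding S_def by auto
    have w1V: "w1 \<in> V" using w1C step.hyps(2) by blast
    have a2: "\<And>w. w\<in>S \<Longrightarrow> R w1 = R w"
    proof -
      fix w assume w: "w \<in> S"
      show "R w1 = R w"
      proof (cases "w = w1")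
        case False
        then have "(w1,w) \<in> E" using Cedge w w1 SC by blast
        moreover have "L w1 = L w" using w w1 unfolding S_def by auto
        ultimately show ?thesis using I2[of w1 w] by blast
      qed simp
    qed
    have a3: "\<And>w. w\<in>C \<Longrightarrow> L w = m \<Longrightarrow> w \<in> P (R w1)"
    proof -
      fix w assume w: "w \<in> C" "L w = m"
      then have "w \<noteq> w1" using w1C by auto
      then have "(w,w1) \<in> E" using Cedge w w1C by blast
      then show "w \<in> P (R w1)" using I3[of w w1] w w1C by auto
    qed
    have a4: "P (R w1) \<noteq> {} \<and> P (R w1) \<subseteq> V \<and> (\<forall>p\<in>P (R w1). L p = m) \<and>
        (\<forall>p\<in>P (R w1). \<forall>q\<in>P (R w1). p \<noteq> q \<longrightarrow> (p,q) \<in> E)"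
      using I4[OF w1V] w1C by auto
    show ?thesis
    proof (rule that[of "R(v := R w1)" "P"])
      show "\<And>x. x \<in> V \<Longrightarrow> (R(v := R w1)) x = R x" using step.hyps(5) by auto
      show "(R(v := R w1)) v \<in> insert v V" using I5 w1V by simp
      show "\<And>w. w\<in>S \<Longrightarrow> (R(v := R w1)) v = R w" using a2 by simp
      show "\<And>w. w\<in>C \<Longrightarrow> L w = m \<Longrightarrow> w \<in> P ((R(v := R w1)) v)" using a3 by simp
      show "P ((R(v := R w1)) v) \<noteq> {} \<and> P ((R(v := R w1)) v) \<subseteq> V \<and>
        (\<forall>p\<in>P ((R(v := R w1)) v). L p = m) \<and>
        (\<forall>p\<in>P ((R(v := R w1)) v). \<forall>q\<in>P ((R(v := R w1)) v). p \<noteq> q \<longrightarrow> (p,q) \<in> E)"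
        using a4 by simp
      show "\<And>x. x \<in> V \<Longrightarrow> P (R x) = P (R x)" by simp
    qed
  qed
  define E1 where "E1 = E \<union> {(v,w) | w. w \<in> C} \<union> {(w,v) | w. w \<in> C}"
  have vV: "v \<notin> V" by (rule step.hyps(5))
  have newE: "\<And>x y. (x,y) \<in> E1 \<Longrightarrow> (x,y) \<in> E \<or> (x = v \<and> y \<in> C) \<or> (y = v \<and> x \<in> C)"
    unfolding E1_def by blast
  have J0: "\<forall>u w. (u,w) \<in> E1 \<longrightarrow> u \<in> insert v V \<and> w \<in> insert v V"
    using newE I0 step.hyps(2) by blast
  have J1: "\<forall>u w. (u,w) \<in> E1 \<longrightarrow> L1 u = L1 w \<or> L1 u = Suc (L1 w) \<or> L1 w = Suc (L1 u)"
  proof (intro allI impI)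
    fix x y assume "(x,y) \<in> E1"
    then consider "(x,y) \<in> E" | "x = v" "y \<in> C" | "y = v" "x \<in> C" using newE by blast
    then show "L1 x = L1 y \<or> L1 x = Suc (L1 y) \<or> L1 y = Suc (L1 x)"
    proof cases
      case 1 then show ?thesis using I0[of x y] I1[of x y] L1V[of x] L1V[of y] by auto
    next
      case 2 then show ?thesis using Cspan[of y] L1V[of y] L1v step.hyps(2) by auto
    next
      case 3 then show ?thesis using Cspan[of x] L1V[of x] L1v step.hyps(2) by auto
    qed
  qed
  have E'E'1: "E' \<subseteq> E'1" unfolding E'1_def by blast
  have J2: "\<forall>u w. (u,w) \<in> E1 \<longrightarrow> L1 u = L1 w \<longrightarrow> (u,w) \<in> E'1 \<and> R1 u = R1 w"
  proof (intro allI impI)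
    fix x y assume xy: "(x,y) \<in> E1" and eq: "L1 x = L1 y"
    from xy consider "(x,y) \<in> E" | "x = v" "y \<in> C" | "y = v" "x \<in> C" using newE by blast
    then show "(x,y) \<in> E'1 \<and> R1 x = R1 y"
    proof cases
      case 1
      then have "x \<in> V" "y \<in> V" using I0[of x y] by auto
      then have "L x = L y" "R1 x = R x" "R1 y = R y" using eq L1V N0 by auto
      then show ?thesis using I2[of x y] 1 E'E'1 by auto
    next
      case 2
      then have "y \<in> S" using eq L1V[of y] L1v step.hyps(2) unfolding S_def by auto
      then show ?thesis using 2 K(1) N2 N0 SV unfolding E'1_def by auto
    next
      case 3
      then have "x \<in> S" using eq L1V[of x] L1v step.hyps(2) unfolding S_def by auto
      then show ?thesis using 3 K(1) N2 N0 SV unfolding E'1_def by auto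
    qed
  qed
  have J3: "\<forall>u w. (u,w) \<in> E1 \<longrightarrow> Suc (L1 u) = L1 w \<longrightarrow> u \<in> P1 (R1 w)"
  proof (intro allI impI)
    fix x y assume xy: "(x,y) \<in> E1" and eq: "Suc (L1 x) = L1 y"
    from xy consider "(x,y) \<in> E" | "x = v" "y \<in> C" | "y = v" "x \<in> C" using newE by blast
    then show "x \<in> P1 (R1 y)"
    proof cases
      case 1
      then have "x \<in> V" "y \<in> V" using I0[of x y] by auto
      then have "Suc (L x) = L y" "P1 (R1 y) = P (R y)" using eq L1V N0 N5 by auto
      then show ?thesis using I3[of x y] 1 by auto
    next
      case 2 then show ?thesis using eq L1V[of y] L1v step.hyps(2) Cspan[of y] by auto
    next
      case 3 then show ?thesis using eq L1V[of x] L1v step.hyps(2) N3 by auto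
    qed
  qed
  have EE1: "E \<subseteq> E1" unfolding E1_def by blast
  have J4: "\<forall>w\<in>insert v V. 0 < L1 w \<longrightarrow> P1 (R1 w) \<noteq> {} \<and> P1 (R1 w) \<subseteq> insert v V \<and> (\<forall>p\<in>P1 (R1 w). Suc (L1 p) = L1 w) \<and>
        (\<forall>p\<in>P1 (R1 w). \<forall>q\<in>P1 (R1 w). p \<noteq> q \<longrightarrow> (p,q) \<in> E1)"
  proof (intro ballI impI)
    fix w assume w: "w \<in> insert v V" "0 < L1 w"
    show "P1 (R1 w) \<noteq> {} \<and> P1 (R1 w) \<subseteq> insert v V \<and> (\<forall>p\<in>P1 (R1 w). Suc (L1 p) = L1 w) \<and>
        (\<forall>p\<in>P1 (R1 w). \<forall>q\<in>P1 (R1 w). p \<noteq> q \<longrightarrow> (p,q) \<in> E1)"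
    proof (cases "w = v")
      case True
      then show ?thesis using N4 L1V L1v EE1 by auto
    next
      case False
      then have wV: "w \<in> V" using w by blast
      have "0 < L w" using w L1V[OF wV] by simp
      then have h: "P (R w) \<noteq> {} \<and> P (R w) \<subseteq> V \<and> (\<forall>p\<in>P (R w). Suc (L p) = L w) \<and>
        (\<forall>p\<in>P (R w). \<forall>q\<in>P (R w). p \<noteq> q \<longrightarrow> (p,q) \<in> E)" using I4[OF wV] by blast
      have "P1 (R1 w) = P (R w)" using N0[OF wV] N5[OF wV] by simp
      then show ?thesis using h L1V wV EE1 by (auto simp: subset_iff)
    qed
  qed
  have J5: "\<forall>w\<in>insert v V. R1 w \<in> insert v V" using N0 N1 I5 by auto
  have "inv1 k (insert v V) E1 L1 R1 P1 E'1"
    unfolding inv1_def using kt1 J0 J1 J2 J3 J4 J5 by blast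
  then show ?case unfolding E1_def by blast
qed



lemma mod_twice:
  assumes "(x::nat) < 2 * m" shows "x mod m = (if x < m then x else x - m)"
proof (cases "x < m")
  case False
  then have "x mod m = (x - m) mod m" using le_mod_geq by simp
  also have "\<dots> = x - m" using assms False by simp
  finally show ?thesis using False by simp
qed simp

lemma modA: assumes "(a::nat) < m" "0 < d" "d < m" shows "(a + d) mod m \<noteq> a"
proof -
  have "(a+d) mod m = (if a+d < m then a+d else a+d-m)" using assms by (intro mod_twice) simp
  then show ?thesis using assms by (cases "a+d < m") simp_all
qed

lemma modB: assumes "(a::nat) < m" "b < m" "b = (a + d1) mod m" "a = (b + d2) mod m" "0 < d1" "0 < d2"
   "d1 + d2 < m" shows False
proof -
  have 1: "(a+d1) mod m = (if a+d1 < m then a+d1 else a+d1-m)" using assms(1,7) by (intro mod_twice) simp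
  have 2: "(b+d2) mod m = (if b+d2 < m then b+d2 else b+d2-m)" using assms(2,7) by (intro mod_twice) simp
  have 3: "b = (if a+d1 < m then a+d1 else a+d1-m)" using 1 assms(3) by simp
  have 4: "a = (if b+d2 < m then b+d2 else b+d2-m)" using 2 assms(4) by simp
  show False
  proof (cases "a+d1 < m")
    case T1: True
    then have b: "b = a + d1" using 3 by simp
    show False
    proof (cases "b+d2 < m")
      case True then have "a = b + d2" using 4 by simp
      then show False using b assms(5,6) by linarith
    next
      case False then have "a = b + d2 - m" using 4 by simp
      then show False using b assms(1,2,5,6,7) False by linarith
    qed
  next
    case F1: False
    then have b: "b = a + d1 - m" using 3 by simp
    show False
    proof (cases "b+d2 < m")
      case True then have "a = b + d2" using 4 by simp
      then show False using b assms(1,2,5,6,7) F1 by linarith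
    next
      case False then have "a = b + d2 - m" using 4 by simp
      then show False using b assms(1,2,5,6,7) False F1 by linarith
    qed
  qed
qed

lemma modC: assumes "(a::nat) < m" "(a + d1) mod m = (a + d2) mod m" "d1 < m" "d2 < m" shows "d1 = d2"
proof -
  have 1: "(a+d1) mod m = (if a+d1 < m then a+d1 else a+d1-m)" using assms by (intro mod_twice) simp
  have 2: "(a+d2) mod m = (if a+d2 < m then a+d2 else a+d2-m)" using assms by (intro mod_twice) simp
  have e: "(if a+d1 < m then a+d1 else a+d1-m) = (if a+d2 < m then a+d2 else a+d2-m)"
    using 1 2 assms(2) by simp
  show ?thesis using e assms(1,3,4) by (auto split: if_split_asm)
qed

lemma lex_app_less: "length (a::nat list) = length b \<Longrightarrow> (a @ x < b @ y) = (a < b \<or> a = b \<and> x < y)"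
proof (induction a arbitrary: b)
  case Nil then show ?case by simp
next
  case (Cons h a)
  then obtain h' b' where b: "b = h' # b'" "length a = length b'" by (cases b) auto
  then show ?case using Cons.IH[OF b(2)] by auto
qed

lemma lex_app_le: "length (a::nat list) = length b \<Longrightarrow> (a @ x \<le> b @ y) = (a < b \<or> a = b \<and> x \<le> y)"
  using lex_app_less[of a b x y] by (auto simp: order_le_less)

lemma max_clique_exists:
  assumes "finite V" "is_clique V E C"
  shows "\<exists>M\<in>maximal_cliques V E. C \<subseteq> M"
proof -
  let ?X = "{D. is_clique V E D \<and> C \<subseteq> D}"
  have "?X \<subseteq> Pow V" unfolding is_clique_def by blast
  then have fX: "finite ?X" using assms(1) finite_subset by blast
  have "C \<in> ?X" using assms(2) by blast
  from finite_has_maximal2[OF fX this] obtain M where M: "M \<in> ?X" "C \<subseteq> M"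
    "\<forall>b\<in>?X. M \<subseteq> b \<longrightarrow> M = b" by blast
  have "M \<in> maximal_cliques V E"
    unfolding maximal_cliques_def
  proof (intro CollectI conjI allI impI)
    show "is_clique V E M" using M(1) by blast
    fix D assume "is_clique V E D \<and> M \<subseteq> D"
    then have "D \<in> ?X" "M \<subseteq> D" using M(2) by auto
    then show "D = M" using M(3) by blast
  qed
  then show ?thesis using M(2) by blast
qed

primrec Sf :: "(nat \<Rightarrow> nat) \<Rightarrow> (nat \<Rightarrow> nat) \<Rightarrow> nat \<Rightarrow> nat \<Rightarrow> nat \<Rightarrow> nat" where
  "Sf pp g m 0 v = 0"
| "Sf pp g m (Suc n) v = (Sf pp g m n (pp v) + 1 + g v) mod m"

primrec Kf :: "(nat \<Rightarrow> nat) \<Rightarrow> (nat \<Rightarrow> nat) \<Rightarrow> (nat \<Rightarrow> nat list) \<Rightarrow> nat \<Rightarrow> nat \<Rightarrow> nat list" where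
  "Kf pp R lab 0 v = [R v]"
| "Kf pp R lab (Suc n) v = Kf pp R lab n (pp v) @ lab v"

locale ph2 =
  fixes V :: "nat set" and E E' :: "(nat \<times> nat) set" and L R :: "nat \<Rightarrow> nat" and P :: "nat \<Rightarrow> nat set"
    and t c :: nat and tr :: "nat \<Rightarrow> nat" and ord :: "nat \<Rightarrow> nat rel" and col :: "nat set \<Rightarrow> nat"
  assumes finV: "finite V"
    and I0: "\<And>u w. (u,w) \<in> E \<Longrightarrow> u \<in> V \<and> w \<in> V"
    and Esym: "\<And>u w. (u,w) \<in> E \<Longrightarrow> (w,u) \<in> E"
    and I1: "\<And>u w. (u,w) \<in> E \<Longrightarrow> L u = L w \<or> L u = Suc (L w) \<or> L w = Suc (L u)"
    and I2: "\<And>u w. (u,w) \<in> E \<Longrightarrow> L u = L w \<Longrightarrow> (u,w) \<in> E' \<and> R u = R w"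
    and I3: "\<And>u w. (u,w) \<in> E \<Longrightarrow> Suc (L u) = L w \<Longrightarrow> u \<in> P (R w)"
    and I4: "\<And>w. w\<in>V \<Longrightarrow> 0 < L w \<Longrightarrow> P (R w) \<noteq> {} \<and> P (R w) \<subseteq> V \<and> (\<forall>p\<in>P (R w). Suc (L p) = L w) \<and>
        (\<forall>p\<in>P (R w). \<forall>q\<in>P (R w). p \<noteq> q \<longrightarrow> (p,q) \<in> E)"
    and trlt: "\<And>v. v \<in> V \<Longrightarrow> tr v < t"
    and tredge: "\<And>u w. (u,w) \<in> E' \<Longrightarrow> tr u \<noteq> tr w"
    and lin: "\<And>i. i < t \<Longrightarrow> linear_order_on {v\<in>V. tr v = i} (ord i)"
    and noX: "\<not> has_X_crossing E' tr ord"
    and colr: "\<And>C. C \<in> maximal_cliques V E' \<Longrightarrow> col C < c"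
    and nice: "\<And>j. j < c \<Longrightarrow> nicely_ordered tr ord {C \<in> maximal_cliques V E'. col C = j}"
begin

definition "pp v = (SOME p. p \<in> P (R v))"
definition "MC v = (SOME M. M \<in> maximal_cliques V E' \<and> P (R v) \<subseteq> M)"
definition "gam v = col (MC v)"
definition "LL j = (SOME Ls. distinct Ls \<and> set Ls = {C \<in> maximal_cliques V E'. col C = j} \<and>
        (\<forall>i j'. i < j' \<and> j' < length Ls \<longrightarrow> clique_precedes tr ord (Ls ! i) (Ls ! j')))"
definition "idx v = (SOME i. i < length (LL (gam v)) \<and> LL (gam v) ! i = MC v)"
definition "lab v = [gam v, idx v, R v]"
definition "mm = 2 * c + 1"
definition "s v = Sf pp gam mm (L v) v"
definition "key v = Kf pp R lab (L v) v"
definition "T v = s v * t + tr v"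
definition "le v w \<longleftrightarrow> L v < L w \<or> (L v = L w \<and> (key v < key w \<or> (key v = key w \<and> (v,w) \<in> ord (tr v))))"
definition "ord' i = {(v,w). v \<in> V \<and> w \<in> V \<and> T v = i \<and> T w = i \<and> le v w}"

lemma R_dep: "R v = R w \<Longrightarrow> pp v = pp w \<and> MC v = MC w \<and> gam v = gam w \<and> idx v = idx w \<and> lab v = lab w"
  unfolding pp_def MC_def gam_def idx_def lab_def by simp

lemma Sf_dep: "R v = R w \<Longrightarrow> Sf pp gam mm n v = Sf pp gam mm n w"
  using R_dep[of v w] by (cases n) simp_all

lemma Kf_dep: "R v = R w \<Longrightarrow> Kf pp R lab n v = Kf pp R lab n w"
  using R_dep[of v w] by (cases n) simp_all

lemma Kf_len: "length (Kf pp R lab n v) = Suc (3 * n)"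
  by (induction n arbitrary: v) (simp_all add: lab_def)

lemma Kf_last: "last (Kf pp R lab n v) = R v"
  by (cases n) (simp_all add: lab_def)

lemma key_R: "key v = key w \<Longrightarrow> R v = R w"
  unfolding key_def using Kf_last by metis

lemma LP:
  assumes "v \<in> V" "0 < L v" "u \<in> P (R v)"
  shows "u \<in> V \<and> Suc (L u) = L v \<and> R u = R (pp v) \<and> pp v \<in> P (R v)"
proof -
  have h: "P (R v) \<noteq> {} \<and> P (R v) \<subseteq> V \<and> (\<forall>p\<in>P (R v). Suc (L p) = L v) \<and>
        (\<forall>p\<in>P (R v). \<forall>q\<in>P (R v). p \<noteq> q \<longrightarrow> (p,q) \<in> E)" using I4[OF assms(1,2)] .
  have pp: "pp v \<in> P (R v)" unfolding pp_def using h by (simp add: some_in_eq)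
  have "R u = R (pp v)"
  proof (cases "u = pp v")
    case False
    then have "(u, pp v) \<in> E" using h pp assms(3) by blast
    moreover have "L u = L (pp v)" using h pp assms(3) by (metis Suc_inject)
    ultimately show ?thesis using I2 by blast
  qed simp
  then show ?thesis using h pp assms(3) by blast
qed

lemma Pclique:
  assumes "v \<in> V" "0 < L v"
  shows "is_clique V E' (P (R v))"
proof -
  have h: "P (R v) \<subseteq> V \<and> (\<forall>p\<in>P (R v). Suc (L p) = L v) \<and>
        (\<forall>p\<in>P (R v). \<forall>q\<in>P (R v). p \<noteq> q \<longrightarrow> (p,q) \<in> E)" using I4[OF assms] by blast
  show ?thesis unfolding is_clique_def
  proof (intro conjI ballI impI)
    show "P (R v) \<subseteq> V" using h by blast
    fix p q assume pq: "p \<in> P (R v)" "q \<in> P (R v)" "p \<noteq> q"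
    then have "(p,q) \<in> E" using h by blast
    moreover have "L p = L q" using h pq by (metis Suc_inject)
    ultimately show "(p,q) \<in> E'" using I2 by blast
  qed
qed

lemma MC_ok:
  assumes "v \<in> V" "0 < L v"
  shows "MC v \<in> maximal_cliques V E' \<and> P (R v) \<subseteq> MC v"
proof -
  have "\<exists>M. M \<in> maximal_cliques V E' \<and> P (R v) \<subseteq> M"
    using max_clique_exists[OF finV Pclique[OF assms]] by blast
  then show ?thesis unfolding MC_def by (rule someI_ex)
qed

lemma gam_lt: "v \<in> V \<Longrightarrow> 0 < L v \<Longrightarrow> gam v < c"
  unfolding gam_def using MC_ok colr by blast

lemma LL_ok:
  assumes "j < c"
  shows "distinct (LL j) \<and> set (LL j) = {C \<in> maximal_cliques V E'. col C = j} \<and>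
        (\<forall>i j'. i < j' \<and> j' < length (LL j) \<longrightarrow> clique_precedes tr ord (LL j ! i) (LL j ! j'))"
  using nice[OF assms] unfolding nicely_ordered_def LL_def by (rule someI_ex)

lemma idx_ok:
  assumes "v \<in> V" "0 < L v"
  shows "idx v < length (LL (gam v)) \<and> LL (gam v) ! idx v = MC v"
proof -
  have "MC v \<in> set (LL (gam v))" using LL_ok[OF gam_lt[OF assms]] MC_ok[OF assms] gam_def by auto
  then have "\<exists>i. i < length (LL (gam v)) \<and> LL (gam v) ! i = MC v" by (simp add: in_set_conv_nth)
  then show ?thesis unfolding idx_def by (rule someI_ex)
qed

lemma s_lt: "s v < mm"
  unfolding s_def mm_def by (cases "L v") simp_all

lemma step_facts:
  assumes "v \<in> V" "0 < L v" "u \<in> P (R v)"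
  shows "s v = (s u + 1 + gam v) mod mm \<and> key v = key u @ lab v"
proof -
  have h: "u \<in> V \<and> Suc (L u) = L v \<and> R u = R (pp v) \<and> pp v \<in> P (R v)" using LP[OF assms] .
  then have "s v = (Sf pp gam mm (L u) (pp v) + 1 + gam v) mod mm" unfolding s_def by (metis Sf.simps(2))
  moreover have "Sf pp gam mm (L u) (pp v) = s u" unfolding s_def using Sf_dep h by metis
  moreover have "key v = Kf pp R lab (L u) (pp v) @ lab v" unfolding key_def using h by (metis Kf.simps(2))
  moreover have "Kf pp R lab (L u) (pp v) = key u" unfolding key_def using Kf_dep h by metis
  ultimately show ?thesis by simp
qed


lemma s_eq: "L v = L w \<Longrightarrow> R v = R w \<Longrightarrow> s v = s w \<and> key v = key w"
  unfolding s_def key_def using Sf_dep Kf_dep by metis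

lemma up_facts:
  assumes "(x,y) \<in> E" "Suc (L x) = L y"
  shows "x \<in> MC y \<and> s y = (s x + 1 + gam y) mod mm \<and> key y = key x @ lab y \<and> gam y < c"
proof -
  have xP: "x \<in> P (R y)" using I3[OF assms] .
  have yV: "y \<in> V" using I0[OF assms(1)] by blast
  have Ly: "0 < L y" using assms(2) by simp
  show ?thesis using step_facts[OF yV Ly xP] MC_ok[OF yV Ly] gam_lt[OF yV Ly] xP by blast
qed

lemma edge_cases:
  assumes "(x,y) \<in> E"
  shows "(L x = L y \<and> (x,y) \<in> E' \<and> s x = s y \<and> key x = key y) \<or>
    (Suc (L x) = L y \<and> x \<in> MC y \<and> s y = (s x + 1 + gam y) mod mm \<and> key y = key x @ lab y \<and> gam y < c) \<or>
    (Suc (L y) = L x \<and> y \<in> MC x \<and> s x = (s y + 1 + gam x) mod mm \<and> key x = key y @ lab x \<and> gam x < c)"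
proof -
  consider "L x = L y" | "Suc (L x) = L y" | "Suc (L y) = L x" using I1[OF assms] by auto
  then show ?thesis
  proof cases
    case 1
    then have "(x,y) \<in> E' \<and> R x = R y" using I2[OF assms] by blast
    then show ?thesis using s_eq[OF 1] 1 by blast
  next
    case 2 then show ?thesis using up_facts[OF assms 2] by blast
  next
    case 3 then show ?thesis using up_facts[OF Esym[OF assms] 3] by blast
  qed
qed

lemma mm_gt: "d < c \<Longrightarrow> Suc d < mm" unfolding mm_def by simp

lemma tpos: "v \<in> V \<Longrightarrow> 0 < t" using trlt by fastforce

lemma T_div: "v \<in> V \<Longrightarrow> T v div t = s v \<and> T v mod t = tr v"
  unfolding T_def using trlt[of v] tpos[of v] by simp

lemma T_eq: "v \<in> V \<Longrightarrow> w \<in> V \<Longrightarrow> (T v = T w) = (s v = s w \<and> tr v = tr w)"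
  using T_div[of v] T_div[of w] unfolding T_def by metis

lemma T_lt: "v \<in> V \<Longrightarrow> T v < t * (2 * c + 1)"
proof -
  assume v: "v \<in> V"
  have "s v + 1 \<le> 2 * c + 1" using s_lt[of v] unfolding mm_def by simp
  then have "(s v + 1) * t \<le> (2 * c + 1) * t" by (rule mult_right_mono) simp
  moreover have "T v < (s v + 1) * t" unfolding T_def using trlt[OF v] by simp
  ultimately have "T v < (2 * c + 1) * t" by linarith
  then show ?thesis by (simp add: mult.commute)
qed

lemma edge_T: "(x,y) \<in> E \<Longrightarrow> T x \<noteq> T y"
proof -
  assume e: "(x,y) \<in> E"
  have V: "x \<in> V" "y \<in> V" using I0[OF e] by auto
  have sl: "s x < mm" "s y < mm" by (rule s_lt)+
  from edge_cases[OF e] consider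
    "L x = L y \<and> (x,y) \<in> E' \<and> s x = s y \<and> key x = key y" |
    "Suc (L x) = L y \<and> x \<in> MC y \<and> s y = (s x + 1 + gam y) mod mm \<and> key y = key x @ lab y \<and> gam y < c" |
    "Suc (L y) = L x \<and> y \<in> MC x \<and> s x = (s y + 1 + gam x) mod mm \<and> key x = key y @ lab x \<and> gam x < c"
    by blast
  then show "T x \<noteq> T y"
  proof cases
    case 1 then have "tr x \<noteq> tr y" using tredge by blast
    then show ?thesis using T_eq[OF V] by simp
  next
    case 2
    have "(s x + Suc (gam y)) mod mm \<noteq> s x" using modA[OF sl(1), of "Suc (gam y)"] mm_gt 2 by simp
    then have "s y \<noteq> s x" using 2 by simp
    then show ?thesis using T_eq[OF V] by simp
  next
    case 3
    have "(s y + Suc (gam x)) mod mm \<noteq> s y" using modA[OF sl(2), of "Suc (gam x)"] mm_gt 3 by simp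
    then have "s y \<noteq> s x" using 3 by simp
    then show ?thesis using T_eq[OF V] by simp
  qed
qed

lemma ordfacts:
  assumes "a < t"
  shows "ord a \<subseteq> {v\<in>V. tr v = a} \<times> {v\<in>V. tr v = a} \<and> refl_on {v\<in>V. tr v = a} (ord a) \<and> trans (ord a)
     \<and> antisym (ord a) \<and> total_on {v\<in>V. tr v = a} (ord a)"
proof -
  have l: "linear_order_on {v\<in>V. tr v = a} (ord a)" by (rule lin[OF assms])
  then have p: "partial_order_on {v\<in>V. tr v = a} (ord a)" and tt: "total_on {v\<in>V. tr v = a} (ord a)"
    unfolding linear_order_on_def by simp_all
  show ?thesis using partial_order_onD[OF p] tt by simp
qed


lemma lab_le: "gam p = gam q \<Longrightarrow> lab p \<le> lab q \<Longrightarrow> idx p \<le> idx q"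
  unfolding lab_def list_le_def by auto

lemma clique_pair:
  assumes p: "p \<in> V" "0 < L p" and q: "q \<in> V" "0 < L q" and g: "gam p = gam q"
    and iq: "idx p \<le> idx q" and a: "a \<in> MC p" and b: "b \<in> MC q" and ab: "a \<noteq> b"
    and tab: "tr a = tr b" and ba: "(b,a) \<in> ord (tr a)"
  shows False
proof -
  have gl: "gam p < c" using gam_lt[OF p] .
  have ip: "idx p < length (LL (gam p)) \<and> LL (gam p) ! idx p = MC p" using idx_ok[OF p] .
  have iq': "idx q < length (LL (gam p)) \<and> LL (gam p) ! idx q = MC q" using idx_ok[OF q] g by simp
  have mq: "MC q \<in> maximal_cliques V E'" using MC_ok[OF q] by blast
  then have cq: "is_clique V E' (MC q)" unfolding maximal_cliques_def by blast
  have aV: "a \<in> V" using MC_ok[OF p] a unfolding maximal_cliques_def is_clique_def by blast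
  have ta: "tr a < t" using trlt[OF aV] .
  show False
  proof (cases "idx p = idx q")
    case True
    then have "MC p = MC q" using ip iq' by simp
    then have "(a,b) \<in> E'" using cq a b ab unfolding is_clique_def by blast
    then show False using tredge tab by blast
  next
    case False
    then have lt: "idx p < idx q" using iq by simp
    have "clique_precedes tr ord (LL (gam p) ! idx p) (LL (gam p) ! idx q)"
      using LL_ok[OF gl] lt iq' by blast
    then have "clique_precedes tr ord (MC p) (MC q)" using ip iq' by simp
    then have "(a,b) \<in> ord (tr a)" using a b tab unfolding clique_precedes_def by blast
    then have "a = b" using ba ordfacts[OF ta] by (meson antisymD)
    then show False using ab by simp
  qed
qed

lemma le_trans':
  assumes "le u v" "le v w" "tr u = tr v" "tr v = tr w" "trans (ord (tr u))"
  shows "le u w"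
proof -
  have L1: "L u \<le> L v" "L v \<le> L w" using assms(1,2) unfolding le_def by auto
  show ?thesis
  proof (cases "L u < L w")
    case True then show ?thesis unfolding le_def by simp
  next
    case False
    then have Le: "L u = L v" "L v = L w" using L1 by auto
    have k1: "key u < key v \<or> (key u = key v \<and> (u,v) \<in> ord (tr u))" using assms(1) Le unfolding le_def by simp
    have k2: "key v < key w \<or> (key v = key w \<and> (v,w) \<in> ord (tr v))" using assms(2) Le unfolding le_def by simp
    show ?thesis
    proof (cases "key u < key w")
      case True then show ?thesis using Le unfolding le_def by simp
    next
      case False
      have "key u = key v"
      proof (rule ccontr)
        assume "key u \<noteq> key v"
        then have "key u < key v" using k1 by blast
        moreover have "key v \<le> key w" using k2 by auto
        ultimately have "key u < key w" by (rule less_le_trans)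
        then show False using False by simp
      qed
      moreover have "key v = key w"
      proof (rule ccontr)
        assume "key v \<noteq> key w"
        then have "key v < key w" using k2 by blast
        then have "key u < key w" using \<open>key u = key v\<close> by simp
        then show False using False by simp
      qed
      ultimately have "key u = key v \<and> key v = key w" by simp
      then have "(u,v) \<in> ord (tr u)" "(v,w) \<in> ord (tr u)" using k1 k2 assms(3) by auto
      then have "(u,w) \<in> ord (tr u)" using assms(5) by (meson transD)
      then show ?thesis using Le \<open>key u = key v \<and> key v = key w\<close> unfolding le_def by simp
    qed
  qed
qed

lemma lin':
  assumes i: "i < t * (2 * c + 1)"
  shows "linear_order_on {v\<in>V. T v = i} (ord' i)"
proof -
  let ?A = "{v\<in>V. T v = i}"
  define a where "a = i mod t"
  have tp: "0 < t" using i by (cases t) simp_all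
  have at: "a < t" unfolding a_def using tp by simp
  have trA: "\<And>v. v \<in> ?A \<Longrightarrow> tr v = a" unfolding a_def using T_div by fastforce
  have of: "ord a \<subseteq> {v\<in>V. tr v = a} \<times> {v\<in>V. tr v = a} \<and> refl_on {v\<in>V. tr v = a} (ord a) \<and> trans (ord a)
     \<and> antisym (ord a) \<and> total_on {v\<in>V. tr v = a} (ord a)" using ordfacts[OF at] .
  have mem: "\<And>v w. (v,w) \<in> ord' i \<longleftrightarrow> v \<in> ?A \<and> w \<in> ?A \<and> le v w" unfolding ord'_def by auto
  have sub: "ord' i \<subseteq> ?A \<times> ?A" using mem by auto
  have refl: "refl_on ?A (ord' i)"
    unfolding refl_on_def
  proof
    fix v assume v: "v \<in> ?A"
    then have "(v,v) \<in> ord a" using of trA[OF v] unfolding refl_on_def by blast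
    then have "le v v" unfolding le_def using trA[OF v] by simp
    then show "(v,v) \<in> ord' i" using mem v by blast
  qed
  have tra: "trans (ord' i)"
  proof (rule transI)
    fix u v w assume "(u,v) \<in> ord' i" "(v,w) \<in> ord' i"
    then have h: "u \<in> ?A" "v \<in> ?A" "w \<in> ?A" "le u v" "le v w" using mem by auto
    have "le u w" using le_trans'[OF h(4,5)] trA[OF h(1)] trA[OF h(2)] trA[OF h(3)] of by simp
    then show "(u,w) \<in> ord' i" using mem h by blast
  qed
  have anti: "antisym (ord' i)"
  proof (rule antisymI)
    fix v w assume "(v,w) \<in> ord' i" "(w,v) \<in> ord' i"
    then have h: "v \<in> ?A" "w \<in> ?A" "le v w" "le w v" using mem by auto
    have Le: "L v = L w" using h(3,4) unfolding le_def by auto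
    have Ke: "key v = key w" using h(3,4) Le unfolding le_def by auto
    have "(v,w) \<in> ord a" "(w,v) \<in> ord a" using h(3,4) Le Ke trA[OF h(1)] trA[OF h(2)] unfolding le_def by auto
    then show "v = w" using of by (meson antisymD)
  qed
  have tot: "total_on ?A (ord' i)"
    unfolding total_on_def
  proof (intro ballI impI)
    fix v w assume h: "v \<in> ?A" "w \<in> ?A" "v \<noteq> w"
    have "le v w \<or> le w v"
    proof (cases "L v = L w")
      case False then show ?thesis unfolding le_def by auto
    next
      case Le: True
      show ?thesis
      proof (cases "key v = key w")
        case False then show ?thesis using Le unfolding le_def by (meson neqE)
      next
        case True
        have "(v,w) \<in> ord a \<or> (w,v) \<in> ord a" using of h trA[OF h(1)] trA[OF h(2)] unfolding total_on_def by blast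
        then show ?thesis using Le True trA[OF h(1)] trA[OF h(2)] unfolding le_def by auto
      qed
    qed
    then show "(v,w) \<in> ord' i \<or> (w,v) \<in> ord' i" using mem h by blast
  qed
  show ?thesis unfolding linear_order_on_def partial_order_on_def preorder_on_def
    using sub refl tra anti tot by blast
qed


lemma noX': "\<not> has_X_crossing E T ord'"
proof
  assume "has_X_crossing E T ord'"
  then obtain u v x y where e1: "(u,v) \<in> E" and e2: "(x,y) \<in> E" and tx: "T u = T x" and ty: "T v = T y"
    and tuv: "T u \<noteq> T v" and ux: "(u,x) \<in> ord' (T u)" and uxn: "u \<noteq> x"
    and yv: "(y,v) \<in> ord' (T v)" and yvn: "y \<noteq> v"
    unfolding has_X_crossing_def by blast
  have V: "u \<in> V" "v \<in> V" "x \<in> V" "y \<in> V" using I0[OF e1] I0[OF e2] by auto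
  have lux: "le u x" using ux unfolding ord'_def by blast
  have lyv: "le y v" using yv unfolding ord'_def by blast
  have st: "s u = s x" "tr u = tr x" "s v = s y" "tr v = tr y"
    using T_eq[OF V(1,3)] T_eq[OF V(2,4)] tx ty by auto
  have sl: "s u < mm" "s v < mm" "s x < mm" "s y < mm" by (rule s_lt)+
  have Lux: "L u \<le> L x" using lux unfolding le_def by auto
  have Lyv: "L y \<le> L v" using lyv unfolding le_def by auto
  from edge_cases[OF e1] consider
    (s1) "L u = L v \<and> (u,v) \<in> E' \<and> s u = s v \<and> key u = key v" |
    (u1) "Suc (L u) = L v \<and> u \<in> MC v \<and> s v = (s u + 1 + gam v) mod mm \<and> key v = key u @ lab v \<and> gam v < c" |
    (d1) "Suc (L v) = L u \<and> v \<in> MC u \<and> s u = (s v + 1 + gam u) mod mm \<and> key u = key v @ lab u \<and> gam u < c"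
    by blast
  note c1 = this
  from edge_cases[OF e2] consider
    (s2) "L x = L y \<and> (x,y) \<in> E' \<and> s x = s y \<and> key x = key y" |
    (u2) "Suc (L x) = L y \<and> x \<in> MC y \<and> s y = (s x + 1 + gam y) mod mm \<and> key y = key x @ lab y \<and> gam y < c" |
    (d2) "Suc (L y) = L x \<and> y \<in> MC x \<and> s x = (s y + 1 + gam x) mod mm \<and> key x = key y @ lab x \<and> gam x < c"
    by blast
  note c2 = this
  have neq1: "s v \<noteq> s u" if "s v = (s u + 1 + g) mod mm" "g < c" for g
  proof -
    have "(s u + Suc g) mod mm \<noteq> s u" using modA[OF sl(1), of "Suc g"] mm_gt[OF that(2)] by simp
    then show ?thesis using that(1) by simp
  qed
  have neq2: "s u \<noteq> s v" if "s u = (s v + 1 + g) mod mm" "g < c" for g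
  proof -
    have "(s v + Suc g) mod mm \<noteq> s v" using modA[OF sl(2), of "Suc g"] mm_gt[OF that(2)] by simp
    then show ?thesis using that(1) by simp
  qed
  have neq3: "s y \<noteq> s x" if "s y = (s x + 1 + g) mod mm" "g < c" for g
  proof -
    have "(s x + Suc g) mod mm \<noteq> s x" using modA[OF sl(3), of "Suc g"] mm_gt[OF that(2)] by simp
    then show ?thesis using that(1) by simp
  qed
  have neq4: "s x \<noteq> s y" if "s x = (s y + 1 + g) mod mm" "g < c" for g
  proof -
    have "(s y + Suc g) mod mm \<noteq> s y" using modA[OF sl(4), of "Suc g"] mm_gt[OF that(2)] by simp
    then show ?thesis using that(1) by simp
  qed
  have mmc: "mm = 2 * c + 1" unfolding mm_def ..
  show False
  proof (cases rule: c1)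
    case s1
    show False
    proof (cases rule: c2)
      case s2
      have L: "L u = L x" using s1 s2 Lux Lyv by simp
      have K: "key u = key v" "key x = key y" using s1 s2 by auto
      have k1: "key u < key x \<or> (key u = key x \<and> (u,x) \<in> ord (tr u))" using lux L unfolding le_def by simp
      have k2: "key y < key v \<or> (key y = key v \<and> (y,v) \<in> ord (tr y))" using lyv L s1 s2 unfolding le_def by simp
      have "key u = key x"
      proof (rule ccontr)
        assume "key u \<noteq> key x"
        then have "key u < key x" "key x < key u" using k1 k2 K by auto
        then show False by simp
      qed
      then have o1: "(u,x) \<in> ord (tr u)" and o2: "(y,v) \<in> ord (tr v)" using k1 k2 K st by auto
      have "tr u \<noteq> tr v" using s1 tredge by blast
      then have "has_X_crossing E' tr ord" unfolding has_X_crossing_def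
        using s1 s2 st o1 o2 uxn yvn by blast
      then show False using noX by blast
    next
      case u2 then show False using neq3[of "gam y"] s1 st by auto
    next
      case d2 then show False using neq4[of "gam x"] s1 st by auto
    qed
  next
    case u1
    then have u1a: "Suc (L u) = L v" and u1b: "u \<in> MC v" and u1c: "s v = (s u + 1 + gam v) mod mm"
      and u1d: "key v = key u @ lab v" and u1e: "gam v < c" by blast+
    show False
    proof (cases rule: c2)
      case s2 then have "s x = s y" by blast
      then show False using neq1[OF u1c u1e] st by simp
    next
      case d2
      then have d2c: "s x = (s y + 1 + gam x) mod mm" and d2e: "gam x < c" by blast+
      have a: "s v = (s u + Suc (gam v)) mod mm" using u1c by simp
      have "s u = s x" by (rule st(1))
      also have "\<dots> = (s y + Suc (gam x)) mod mm" using d2c by simp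
      also have "s y = s v" using st(3) by simp
      finally have b: "s u = (s v + Suc (gam x)) mod mm" .
      have "Suc (gam v) + Suc (gam x) < mm" using u1e d2e unfolding mm_def by simp
      then show False using modB[OF sl(1,2) a b] by simp
    next
      case u2
      then have u2a: "Suc (L x) = L y" and u2b: "x \<in> MC y" and u2c: "s y = (s x + 1 + gam y) mod mm"
        and u2d: "key y = key x @ lab y" and u2e: "gam y < c" by blast+
      have L: "L u = L x" "L v = L y" using u1a u2a Lux Lyv by auto
      have len: "length (key x) = length (key u)" unfolding key_def using L Kf_len by simp
      have ga: "Suc (gam v) = Suc (gam y)"
      proof (rule modC[OF sl(1)])
        have "(s u + Suc (gam v)) mod mm = s v" using u1c by simp
        also have "\<dots> = s y" by (rule st(3))
        also have "\<dots> = (s x + Suc (gam y)) mod mm" using u2c by simp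
        also have "\<dots> = (s u + Suc (gam y)) mod mm" using st(1) by simp
        finally show "(s u + Suc (gam v)) mod mm = (s u + Suc (gam y)) mod mm" .
        show "Suc (gam v) < mm" "Suc (gam y) < mm" using u1e u2e mm_gt by auto
      qed
      have k1: "key u < key x \<or> (key u = key x \<and> (u,x) \<in> ord (tr u))" using lux L unfolding le_def by simp
      have "key y \<le> key v" using lyv L unfolding le_def by auto
      then have "key x @ lab y \<le> key u @ lab v" using u1d u2d by simp
      then have k2: "key x < key u \<or> key x = key u \<and> lab y \<le> lab v" using lex_app_le[OF len] by simp
      have "key u = key x"
      proof (rule ccontr)
        assume "key u \<noteq> key x"
        then have "key u < key x" "key x < key u" using k1 k2 by auto
        then show False by simp
      qed
      then have o1: "(u,x) \<in> ord (tr u)" and lb: "lab y \<le> lab v" using k1 k2 by auto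
      have gg: "gam y = gam v" using ga by simp
      have iq: "idx y \<le> idx v" using lab_le[OF gg lb] .
      have Ly: "0 < L y" "0 < L v" using u1a u2a by auto
      have o1': "(u,x) \<in> ord (tr x)" using o1 st(2) by simp
      show False
        using clique_pair[OF V(4) Ly(1) V(2) Ly(2) gg iq u2b u1b uxn[symmetric] st(2)[symmetric] o1'] .
    qed
  next
    case d1
    then have d1a: "Suc (L v) = L u" and d1b: "v \<in> MC u" and d1c: "s u = (s v + 1 + gam u) mod mm"
      and d1d: "key u = key v @ lab u" and d1e: "gam u < c" by blast+
    show False
    proof (cases rule: c2)
      case s2 then have "s x = s y" by blast
      then show False using neq2[OF d1c d1e] st by simp
    next
      case u2
      then have u2c: "s y = (s x + 1 + gam y) mod mm" and u2e: "gam y < c" by blast+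
      have a: "s u = (s v + Suc (gam u)) mod mm" using d1c by simp
      have "s v = s y" by (rule st(3))
      also have "\<dots> = (s x + Suc (gam y)) mod mm" using u2c by simp
      also have "s x = s u" using st(1) by simp
      finally have b: "s v = (s u + Suc (gam y)) mod mm" .
      have "Suc (gam u) + Suc (gam y) < mm" using d1e u2e unfolding mm_def by simp
      then show False using modB[OF sl(2,1) a b] by simp
    next
      case d2
      then have d2a: "Suc (L y) = L x" and d2b: "y \<in> MC x" and d2c: "s x = (s y + 1 + gam x) mod mm"
        and d2d: "key x = key y @ lab x" and d2e: "gam x < c" by blast+
      have L: "L u = L x" "L v = L y" using d1a d2a Lux Lyv by auto
      have len: "length (key v) = length (key y)" unfolding key_def using L Kf_len by simp
      have ga: "Suc (gam u) = Suc (gam x)"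
      proof (rule modC[OF sl(2)])
        have "(s v + Suc (gam u)) mod mm = s u" using d1c by simp
        also have "\<dots> = s x" by (rule st(1))
        also have "\<dots> = (s y + Suc (gam x)) mod mm" using d2c by simp
        also have "\<dots> = (s v + Suc (gam x)) mod mm" using st(3) by simp
        finally show "(s v + Suc (gam u)) mod mm = (s v + Suc (gam x)) mod mm" .
        show "Suc (gam u) < mm" "Suc (gam x) < mm" using d1e d2e mm_gt by auto
      qed
      have k2: "key y < key v \<or> (key y = key v \<and> (y,v) \<in> ord (tr y))" using lyv L unfolding le_def by simp
      have "key u \<le> key x" using lux L unfolding le_def by auto
      then have "key v @ lab u \<le> key y @ lab x" using d1d d2d by simp
      then have k1: "key v < key y \<or> key v = key y \<and> lab u \<le> lab x" using lex_app_le[OF len] by simp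
      have "key v = key y"
      proof (rule ccontr)
        assume "key v \<noteq> key y"
        then have "key v < key y" "key y < key v" using k1 k2 by auto
        then show False by simp
      qed
      then have o2: "(y,v) \<in> ord (tr y)" and lb: "lab u \<le> lab x" using k1 k2 by auto
      have gg: "gam u = gam x" using ga by simp
      have iq: "idx u \<le> idx x" using lab_le[OF gg lb] .
      have Lu: "0 < L u" "0 < L x" using d1a d2a by auto
      have o2': "(y,v) \<in> ord (tr v)" using o2 st(4) by simp
      show False
        using clique_pair[OF V(1) Lu(1) V(3) Lu(2) gg iq d1b d2b yvn[symmetric] st(4) o2'] .
    qed
  qed
qed

lemma layout: "track_layout V E (t * (2 * c + 1)) T ord'"
  unfolding track_layout_def track_assignment_def
proof (intro conjI allI impI ballI)
  show "\<And>v. v \<in> V \<Longrightarrow> T v < t * (2 * c + 1)" by (rule T_lt)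
  show "\<And>u w. (u,w) \<in> E \<Longrightarrow> T u \<noteq> T w" by (rule edge_T)
  show "\<And>i. i < t * (2 * c + 1) \<Longrightarrow> linear_order_on {v\<in>V. T v = i} (ord' i)" by (rule lin')
  show "\<not> has_X_crossing E T ord'" by (rule noX')
qed

end


lemma ktree_sym: "ktree k V E \<Longrightarrow> (u,w) \<in> E \<Longrightarrow> (w,u) \<in> E"
proof (induction arbitrary: u w rule: ktree.induct)
  case (base V) then show ?case by (auto simp: complete_edges_def)
next
  case (step V E C v) then show ?case by blast
qed

theorem lemma5:
  fixes k c t :: nat
  assumes "k \<ge> 1" and "c \<ge> 1" and "t \<ge> 1"
    and "\<forall>V E. ktree k V E \<longrightarrow>
           (\<exists>tr ord. track_layout V E t tr ord \<and> clique_colorable V E tr ord c)"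
  shows "\<forall>V E. ktree (k + 1) V E \<longrightarrow> track_number V E \<le> t * (2 * c + 1)"
proof (intro allI impI)
  fix V E assume kt0: "ktree (k + 1) V E"
  then have kt: "ktree (Suc k) V E" by simp
  obtain L R P E' where inv: "inv1 k V E L R P E'" using phase1[OF kt] by blast
  note c = inv[unfolded inv1_def]
  have kt': "ktree k V E'" using c by (rule conjunct1)
  note c1 = c[THEN conjunct2] note c2 = c1[THEN conjunct2] note c3 = c2[THEN conjunct2]
  note c4 = c3[THEN conjunct2] note c5 = c4[THEN conjunct2]
  have I0: "\<And>u w. (u,w) \<in> E \<Longrightarrow> u \<in> V \<and> w \<in> V" using c1[THEN conjunct1] by blast
  have I1: "\<And>u w. (u,w) \<in> E \<Longrightarrow> L u = L w \<or> L u = Suc (L w) \<or> L w = Suc (L u)" using c2[THEN conjunct1] by blast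
  have I2: "\<And>u w. (u,w) \<in> E \<Longrightarrow> L u = L w \<Longrightarrow> (u,w) \<in> E' \<and> R u = R w" using c3[THEN conjunct1] by blast
  have I3: "\<And>u w. (u,w) \<in> E \<Longrightarrow> Suc (L u) = L w \<Longrightarrow> u \<in> P (R w)" using c4[THEN conjunct1] by blast
  have I4: "\<And>w. w\<in>V \<Longrightarrow> 0 < L w \<Longrightarrow> P (R w) \<noteq> {} \<and> P (R w) \<subseteq> V \<and> (\<forall>p\<in>P (R w). Suc (L p) = L w) \<and>
        (\<forall>p\<in>P (R w). \<forall>q\<in>P (R w). p \<noteq> q \<longrightarrow> (p,q) \<in> E)"
    using c5[THEN conjunct1] by blast
  have finV: "finite V" using ktree_basic[OF kt] by blast
  have Esym: "\<And>u w. (u,w) \<in> E \<Longrightarrow> (w,u) \<in> E" using ktree_sym[OF kt] by blast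
  obtain tr ord where lay: "track_layout V E' t tr ord" and cc: "clique_colorable V E' tr ord c"
    using assms(4) kt' by blast
  obtain col where col1: "\<forall>C\<in>maximal_cliques V E'. col C < c"
    and col2: "\<forall>j<c. nicely_ordered tr ord {C \<in> maximal_cliques V E'. col C = j}"
    using cc unfolding clique_colorable_def by blast
  have ta: "track_assignment V E' t tr ord" and nx: "\<not> has_X_crossing E' tr ord"
    using lay unfolding track_layout_def by blast+
  have trlt: "\<And>v. v \<in> V \<Longrightarrow> tr v < t" using ta unfolding track_assignment_def by blast
  have tredge: "\<And>u w. (u,w) \<in> E' \<Longrightarrow> tr u \<noteq> tr w" using ta unfolding track_assignment_def by blast
  have lin: "\<And>i. i < t \<Longrightarrow> linear_order_on {v\<in>V. tr v = i} (ord i)" using ta unfolding track_assignment_def by blast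
  interpret ph2 V E E' L R P t c tr ord col
  proof
    show "finite V" by (rule finV)
    show "\<And>u w. (u,w) \<in> E \<Longrightarrow> u \<in> V \<and> w \<in> V" by (rule I0)
    show "\<And>u w. (u,w) \<in> E \<Longrightarrow> (w,u) \<in> E" by (rule Esym)
    show "\<And>u w. (u,w) \<in> E \<Longrightarrow> L u = L w \<or> L u = Suc (L w) \<or> L w = Suc (L u)" by (rule I1)
    show "\<And>u w. (u,w) \<in> E \<Longrightarrow> L u = L w \<Longrightarrow> (u,w) \<in> E' \<and> R u = R w" by (rule I2)
    show "\<And>u w. (u,w) \<in> E \<Longrightarrow> Suc (L u) = L w \<Longrightarrow> u \<in> P (R w)" by (rule I3)
    show "\<And>w. w\<in>V \<Longrightarrow> 0 < L w \<Longrightarrow> P (R w) \<noteq> {} \<and> P (R w) \<subseteq> V \<and> (\<forall>p\<in>P (R w). Suc (L p) = L w) \<and>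
        (\<forall>p\<in>P (R w). \<forall>q\<in>P (R w). p \<noteq> q \<longrightarrow> (p,q) \<in> E)" by (rule I4)
    show "\<And>v. v \<in> V \<Longrightarrow> tr v < t" by (rule trlt)
    show "\<And>u w. (u,w) \<in> E' \<Longrightarrow> tr u \<noteq> tr w" by (rule tredge)
    show "\<And>i. i < t \<Longrightarrow> linear_order_on {v\<in>V. tr v = i} (ord i)" by (rule lin)
    show "\<not> has_X_crossing E' tr ord" by (rule nx)
    show "\<And>C. C \<in> maximal_cliques V E' \<Longrightarrow> col C < c" using col1 by blast
    show "\<And>j. j < c \<Longrightarrow> nicely_ordered tr ord {C \<in> maximal_cliques V E'. col C = j}" using col2 by blast
  qed
  have "\<exists>tr ord. track_layout V E (t * (2 * c + 1)) tr ord" using layout by blast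
  then show "track_number V E \<le> t * (2 * c + 1)"
    unfolding track_number_def by (rule Least_le)
qed

end
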